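(* Let $D[X]$ be a directed sub-block and let $W\subsetneq X$ with $|W|\ge2$ contain a node $i$ that is reachable from all other nodes both in $D[W]$ and in $D[X]$. Then there is a node $k\in X\setminus W$ such that $W\cup\{k\}$ can be generated from $W$, and $i$ is reachable from all other nodes in $D[W\cup\{k\}]$.
   Context: $D=(V,A)$ is a directed graph. $\mathrm{IN}(X)$ is the set of nodes from which some member of $X$ is reachable by a directed path. For disjoint nonempty $X,Y,Z$, $f_E(X,Y,Z)=1$ iff $\mathrm{IN}(X)\cap\mathrm{IN}(Y)=\emptyset$ computed in $D-Z$; node $j$ is dynamically partitioning relative to $k$ and $Y$ iff $f_E(\{k\},Y,\{j\})=1$. A set $W_n$ of size $n$ can be generated from $W_m$ of size $m$, $2\le m<n$, iff there are sets $W_m\subset\dots\subset W_n$ with $W_{l+1}=W_l\cup\{k\}$, $k\in V\setminus W_l$, such that there is an arc from $k$ to some $j\in W_l$ that is not dynamically partitioning relative to $k$ and $W_l\setminus\{j\}$. $D[W]$ is the subgraph induced on $W$; reachability in $D[W]$ is via directed paths inside $D[W]$. A graph is biconnected if it has at least three vertices, is connected and remains connected after deleting any one vertex. $D[X]$ is a directed sub-block if some node of $X$ is reachable within $D[X]$ from all other nodes and the underlying undirected graph of $D[X]$ is biconnected. *)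

theory Defs
  imports Main
begin

definition digraph :: "'a set \<Rightarrow> ('a \<times> 'a) set \<Rightarrow> bool" where
  "digraph V A \<longleftrightarrow> finite V \<and> A \<subseteq> V \<times> V"

definition induced_arcs :: "('a \<times> 'a) set \<Rightarrow> 'a set \<Rightarrow> ('a \<times> 'a) set" where
  "induced_arcs A W = A \<inter> (W \<times> W)"

definition reach_in :: "('a \<times> 'a) set \<Rightarrow> 'a set \<Rightarrow> 'a \<Rightarrow> 'a \<Rightarrow> bool" where
  "reach_in A W u v \<longleftrightarrow> u \<in> W \<and> v \<in> W \<and> (u, v) \<in> (induced_arcs A W)\<^sup>*"

definition IN_minus :: "'a set \<Rightarrow> ('a \<times> 'a) set \<Rightarrow> 'a set \<Rightarrow> 'a set \<Rightarrow> 'a set" where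
  "IN_minus V A Z X = {v. \<exists>x\<in>X. reach_in A (V - Z) v x}"

definition f_E :: "'a set \<Rightarrow> ('a \<times> 'a) set \<Rightarrow> 'a set \<Rightarrow> 'a set \<Rightarrow> 'a set \<Rightarrow> bool" where
  "f_E V A X Y Z \<longleftrightarrow> IN_minus V A Z X \<inter> IN_minus V A Z Y = {}"

definition dyn_partitioning :: "'a set \<Rightarrow> ('a \<times> 'a) set \<Rightarrow> 'a \<Rightarrow> 'a \<Rightarrow> 'a set \<Rightarrow> bool" where
  "dyn_partitioning V A j k Y \<longleftrightarrow> f_E V A {k} Y {j}"

definition gen_step :: "'a set \<Rightarrow> ('a \<times> 'a) set \<Rightarrow> 'a set \<Rightarrow> 'a set \<Rightarrow> bool" where
  "gen_step V A W W' \<longleftrightarrow> (\<exists>k \<in> V - W. W' = insert k W \<and>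
      (\<exists>j \<in> W. (k, j) \<in> A \<and> \<not> dyn_partitioning V A j k (W - {j})))"

definition generated :: "'a set \<Rightarrow> ('a \<times> 'a) set \<Rightarrow> 'a set \<Rightarrow> 'a set \<Rightarrow> bool" where
  "generated V A Wm Wn \<longleftrightarrow> Wm \<subseteq> V \<and> finite Wm \<and> 2 \<le> card Wm \<and> card Wm < card Wn \<and>
      (gen_step V A)\<^sup>+\<^sup>+ Wm Wn"

text \<open>Undirected graphs on a vertex set S with a symmetric edge relation E.\<close>
definition ug_connected :: "'a set \<Rightarrow> ('a \<times> 'a) set \<Rightarrow> bool" where
  "ug_connected S E \<longleftrightarrow> (\<forall>u\<in>S. \<forall>v\<in>S. (u, v) \<in> (E \<inter> S \<times> S)\<^sup>*)"

definition biconnected :: "'a set \<Rightarrow> ('a \<times> 'a) set \<Rightarrow> bool" where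
  "biconnected S E \<longleftrightarrow> finite S \<and> 3 \<le> card S \<and> ug_connected S E \<and>
      (\<forall>v\<in>S. ug_connected (S - {v}) E)"

definition underlying :: "('a \<times> 'a) set \<Rightarrow> 'a set \<Rightarrow> ('a \<times> 'a) set" where
  "underlying A X = {(u, v). u \<noteq> v \<and> ((u, v) \<in> induced_arcs A X \<or> (v, u) \<in> induced_arcs A X)}"

definition directed_sub_block :: "'a set \<Rightarrow> ('a \<times> 'a) set \<Rightarrow> 'a set \<Rightarrow> bool" where
  "directed_sub_block V A X \<longleftrightarrow> X \<subseteq> V \<and>
     (\<exists>r\<in>X. \<forall>v\<in>X. reach_in A X v r) \<and> biconnected X (underlying A X)"

end

theory Submission
  imports Defs
begin

lemma reach_mono: "reach_in A S u v \<Longrightarrow> S \<subseteq> T \<Longrightarrow> reach_in A T u v"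
  unfolding reach_in_def induced_arcs_def
proof -
  assume a: "u \<in> S \<and> v \<in> S \<and> (u, v) \<in> (A \<inter> S \<times> S)\<^sup>*" and b: "S \<subseteq> T"
  have "A \<inter> S \<times> S \<subseteq> A \<inter> T \<times> T" using b by auto
  then have "(u, v) \<in> (A \<inter> T \<times> T)\<^sup>*" using a rtrancl_mono by blast
  then show "u \<in> T \<and> v \<in> T \<and> (u, v) \<in> (A \<inter> T \<times> T)\<^sup>*" using a b by auto
qed

lemma first_hit:
  assumes "(x,y) \<in> (A \<inter> X\<times>X)\<^sup>*" "y \<in> W" "x \<in> X" "x \<notin> W"
  shows "\<exists>k w. (x,k) \<in> (A \<inter> (X-W)\<times>(X-W))\<^sup>* \<and> k \<in> X - W \<and> (k,w) \<in> A \<and> w \<in> W"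
  using assms
proof (induction rule: converse_rtrancl_induct)
  case base
  then show ?case by simp
next
  case (step x z)
  show ?case
  proof (cases "z \<in> W")
    case True
    then show ?thesis using step by blast
  next
    case False
    then obtain k w where "(z,k) \<in> (A \<inter> (X-W)\<times>(X-W))\<^sup>*" "k \<in> X - W" "(k,w) \<in> A" "w \<in> W"
      using step by blast
    moreover have "(x,z) \<in> A \<inter> (X-W)\<times>(X-W)" using step False by auto
    ultimately show ?thesis by (meson converse_rtrancl_into_rtrancl)
  qed
qed

lemma ss_stay: "(x,k) \<in> (A \<inter> S\<times>S)\<^sup>* \<Longrightarrow> x \<in> S \<Longrightarrow> k \<in> S"
  by (induction rule: rtrancl_induct) auto

lemma two_elem: "2 \<le> card W \<Longrightarrow> \<exists>w\<in>W. w \<noteq> j"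
proof (rule ccontr)
  assume "2 \<le> card W" "\<not> (\<exists>w\<in>W. w \<noteq> j)"
  then have "W \<subseteq> {j}" by auto
  then have "card W \<le> 1"
    using card_mono[of "{j}" W] by simp
  then show False using \<open>2 \<le> card W\<close> by simp
qed

theorem mainTheorem10:
  fixes V :: "'a set" and A :: "('a \<times> 'a) set" and X W :: "'a set" and i :: 'a
  assumes "digraph V A"
    and "directed_sub_block V A X"
    and "W \<subset> X"
    and "2 \<le> card W"
    and "i \<in> W"
    and "\<forall>v\<in>W. reach_in A W v i"
    and "\<forall>v\<in>X. reach_in A X v i"
  shows "\<exists>k \<in> X - W. generated V A W (insert k W) \<and>
           (\<forall>v \<in> insert k W. reach_in A (insert k W) v i)"
proof -
  define S where "S = X - W"
  define SS where "SS = A \<inter> S \<times> S"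
  have XV: "X \<subseteq> V" using assms(2) unfolding directed_sub_block_def by auto
  have finV: "finite V" using assms(1) unfolding digraph_def by auto
  have bic: "biconnected X (underlying A X)" using assms(2) unfolding directed_sub_block_def by auto
  have SSsub: "SS\<^sup>* \<subseteq> (induced_arcs A (X-{j}))\<^sup>*" if "j \<in> W" for j
  proof -
    have "SS \<subseteq> induced_arcs A (X-{j})" using that unfolding SS_def S_def induced_arcs_def by auto
    then show ?thesis using rtrancl_mono by blast
  qed
  have nonempty: "\<exists>k w. (x,k) \<in> SS\<^sup>* \<and> k \<in> S \<and> (k,w) \<in> A \<and> w \<in> W" if "x \<in> S" for x
  proof -
    have "reach_in A X x i" using assms(7) that S_def by auto
    then have "(x,i) \<in> (A \<inter> X\<times>X)\<^sup>*" unfolding reach_in_def induced_arcs_def by auto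
    then show ?thesis using first_hit[of x i A X W] assms(5) that unfolding S_def SS_def by auto
  qed
  have G: "\<exists>k j v w. k\<in>S \<and> j\<in>W \<and> (k,j)\<in>A \<and> w\<in>W \<and> w\<noteq>j \<and>
            reach_in A (X-{j}) v k \<and> reach_in A (X-{j}) v w"
  proof (rule ccontr)
    assume nG: "\<not> ?thesis"
    have uniq: "w1 = w2" if "x \<in> S" "(x,k1) \<in> SS\<^sup>*" "(k1,w1) \<in> A" "w1 \<in> W"
        "(x,k2) \<in> SS\<^sup>*" "(k2,w2) \<in> A" "w2 \<in> W" for x k1 k2 w1 w2
    proof (rule ccontr)
      assume ne: "w1 \<noteq> w2"
      have k1S: "k1 \<in> S" using ss_stay[of x k1 A S] that(1,2) unfolding SS_def by simp
      have k2S: "k2 \<in> S" using ss_stay[of x k2 A S] that(1,5) unfolding SS_def by simp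
      have "reach_in A (X-{w1}) x k1"
        using SSsub[OF that(4)] that k1S unfolding reach_in_def S_def by auto
      moreover have "reach_in A (X-{w1}) x w2"
      proof -
        have "(x,k2) \<in> (induced_arcs A (X-{w1}))\<^sup>*" using SSsub[OF that(4)] that by auto
        moreover have "(k2,w2) \<in> induced_arcs A (X-{w1})"
          using k2S that ne assms(3) unfolding induced_arcs_def S_def by auto
        ultimately show ?thesis using that ne assms(3) unfolding reach_in_def S_def by auto
      qed
      ultimately have "\<exists>k j v w. k\<in>S \<and> j\<in>W \<and> (k,j)\<in>A \<and> w\<in>W \<and> w\<noteq>j \<and>
            reach_in A (X-{j}) v k \<and> reach_in A (X-{j}) v w"
        using k1S that(3,4,7) ne by (intro exI[of _ k1] exI[of _ w1] exI[of _ x] exI[of _ w2]) auto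
      then show False using nG by simp
    qed
    obtain k0 where k0: "k0 \<in> S" using assms(3) S_def by auto
    obtain k0' j where kj: "(k0,k0') \<in> SS\<^sup>*" "k0' \<in> S" "(k0',j) \<in> A" "j \<in> W"
      using nonempty[OF k0] by auto
    obtain w where w: "w \<in> W" "w \<noteq> j" using two_elem[OF assms(4)] by auto
    define U where "U = underlying A X \<inter> (X-{j})\<times>(X-{j})"
    have "ug_connected (X - {j}) (underlying A X)" using bic kj assms(3) unfolding biconnected_def by auto
    then have path: "(k0, w) \<in> U\<^sup>*" unfolding ug_connected_def U_def
      using k0 w kj(4) assms(3) S_def by auto
    have claim: "y \<in> S \<and> (\<exists>k. (y,k) \<in> SS\<^sup>* \<and> (k,j) \<in> A)" if "(k0,y) \<in> U\<^sup>*" for y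
      using that
    proof (induction rule: rtrancl_induct)
      case base
      then show ?case using k0 kj by auto
    next
      case (step y z)
      then obtain k where yS: "y \<in> S" and yk: "(y,k) \<in> SS\<^sup>*" "(k,j) \<in> A" by auto
      have kS: "k \<in> S" using ss_stay[of y k A S] yk(1) yS unfolding SS_def by simp
      have zX: "z \<in> X" "z \<noteq> j" using step(2) unfolding U_def by auto
      have arcs: "(y,z) \<in> A \<or> (z,y) \<in> A" using step(2) unfolding U_def underlying_def induced_arcs_def by auto
      show ?case
      proof (cases "z \<in> W")
        case True
        show ?thesis
        proof (cases "(y,z) \<in> A")
          case True
          have "j = z" using uniq[OF yS yk(1) yk(2) kj(4) _ True \<open>z \<in> W\<close>] by auto
          then show ?thesis using zX by simp
        next
          case False
          then have zy: "(z,y) \<in> A" using arcs by auto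
          have "reach_in A (X-{j}) z k"
          proof -
            have "(z,y) \<in> induced_arcs A (X-{j})" using zy zX yS kj(4) unfolding induced_arcs_def S_def by auto
            moreover have "(y,k) \<in> (induced_arcs A (X-{j}))\<^sup>*" using SSsub[OF kj(4)] yk by auto
            ultimately show ?thesis using zX kS kj(4) unfolding reach_in_def S_def
              by (auto intro: converse_rtrancl_into_rtrancl)
          qed
          moreover have "reach_in A (X-{j}) z z" using zX unfolding reach_in_def by auto
          ultimately have "\<exists>k j v w. k\<in>S \<and> j\<in>W \<and> (k,j)\<in>A \<and> w\<in>W \<and> w\<noteq>j \<and>
            reach_in A (X-{j}) v k \<and> reach_in A (X-{j}) v w"
            using kS yk(2) kj(4) \<open>z \<in> W\<close> zX by (intro exI[of _ k] exI[of _ j] exI[of _ z] exI[of _ z]) auto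
          then show ?thesis using nG by simp
        qed
      next
        case False
        then have zS: "z \<in> S" using zX S_def by auto
        show ?thesis
        proof (cases "(y,z) \<in> A")
          case True
          obtain k' w' where kw: "(z,k') \<in> SS\<^sup>*" "k' \<in> S" "(k',w') \<in> A" "w' \<in> W"
            using nonempty[OF zS] by auto
          have "(y,k') \<in> SS\<^sup>*" using True yS zS kw(1) unfolding SS_def
            by (auto intro: converse_rtrancl_into_rtrancl)
          then have "j = w'" using uniq[OF yS yk(1) yk(2) kj(4) _ kw(3) kw(4)] by auto
          then show ?thesis using zS kw by auto
        next
          case False
          then have "(z,y) \<in> A" using arcs by auto
          then have "(z,k) \<in> SS\<^sup>*" using yS zS yk(1) unfolding SS_def
            by (auto intro: converse_rtrancl_into_rtrancl)
          then show ?thesis using zS yk(2) by auto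
        qed
      qed
    qed
    from claim[OF path] have "w \<in> S" by auto
    then show False using w S_def by auto
  qed
  then obtain k j v w where kjvw: "k\<in>S" "j\<in>W" "(k,j)\<in>A" "w\<in>W" "w\<noteq>j"
    "reach_in A (X-{j}) v k" "reach_in A (X-{j}) v w" by blast
  have XjV: "X - {j} \<subseteq> V - {j}" using XV by auto
  have finW: "finite W" using finV XV assms(3) by (meson finite_subset psubset_imp_subset subset_trans)
  have kW: "k \<notin> W" "k \<in> X" using kjvw S_def by auto
  have ndp: "\<not> dyn_partitioning V A j k (W - {j})"
  proof -
    have "v \<in> IN_minus V A {j} {k}" unfolding IN_minus_def using reach_mono[OF kjvw(6) XjV] by auto
    moreover have "v \<in> IN_minus V A {j} (W - {j})" unfolding IN_minus_def
      using reach_mono[OF kjvw(7) XjV] kjvw(4,5) by auto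
    ultimately show ?thesis unfolding dyn_partitioning_def f_E_def by blast
  qed
  have kVW: "k \<in> V - W" using kW XV by auto
  have step: "gen_step V A W (insert k W)"
    unfolding gen_step_def using kVW kjvw(2,3) ndp by blast
  have gen: "generated V A W (insert k W)"
    unfolding generated_def using step finW kW XV assms(3,4) by auto
  have reach: "\<forall>v \<in> insert k W. reach_in A (insert k W) v i"
  proof
    fix u assume u: "u \<in> insert k W"
    show "reach_in A (insert k W) u i"
    proof (cases "u = k")
      case True
      have "reach_in A (insert k W) j i" using reach_mono[OF assms(6)[rule_format, OF kjvw(2)]] by auto
      moreover have "(k,j) \<in> induced_arcs A (insert k W)" using kjvw unfolding induced_arcs_def by auto
      ultimately show ?thesis using True unfolding reach_in_def
        by (auto intro: converse_rtrancl_into_rtrancl)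
    next
      case False
      then have "u \<in> W" using u by auto
      then show ?thesis using reach_mono[OF assms(6)[rule_format, OF \<open>u \<in> W\<close>]] by auto
    qed
  qed
  show ?thesis using gen reach kW by blast
qed

end
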